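(* Consider a Markov decision process with state space $\mathcal{S}$, action space $\mathcal{A}$, transition kernel $p(s' \mid s,a)$, reward function $r$, initial state distribution $p(s_0)$, and discount factor $\gamma$. Let $\pi, \hat\pi : \mathcal{S} \to \Delta(\mathcal{A})$ be policies and let $f : \mathbb{R} \to \mathbb{R}$ be a bounded, measurable, non-negative, non-decreasing function. Suppose that $\pi$ satisfies $\pi(a \mid s) \propto f(A_{\hat\pi}(s,a))\,\hat\pi(a \mid s)$ (for every $s \in \mathcal{S}$). Then $J(\pi) \geq J(\hat\pi)$.
   Context: $\Delta(\mathcal{A})$ denotes the set of probability distributions on $\mathcal{A}$. For a policy $\pi$, $J(\pi) = \mathbb{E}_{\tau \sim p(\tau\mid\pi)}\left[\sum_{t} \gamma^t r(s_t,a_t)\right]$, where trajectories $\tau = (s_0,a_0,s_1,a_1,\dots)$ are generated by $s_0 \sim p(s_0)$, $a_t \sim \pi(\cdot\mid s_t)$, $s_{t+1} \sim p(\cdot \mid s_t,a_t)$. For a policy $\hat\pi$, $Q_{\hat\pi}(s,a)$ is the expected discounted sum of future rewards obtained by starting at $s$, taking action $a$, and following $\hat\pi$ thereafter; $V_{\hat\pi}(s) = \mathbb{E}_{a\sim\hat\pi(\cdot\mid s)}[Q_{\hat\pi}(s,a)]$; and $A_{\hat\pi}(s,a) = Q_{\hat\pi}(s,a) - V_{\hat\pi}(s)$ is the advantage. The relation $\pi(a\mid s) \propto f(A_{\hat\pi}(s,a))\hat\pi(a\mid s)$ means $\pi(a\mid s) = f(A_{\hat\pi}(s,a))\hat\pi(a\mid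 s)/Z(s)$ with normalizer $Z(s) = \int_{\mathcal{A}} f(A_{\hat\pi}(s,a))\,\hat\pi(\mathrm{d}a\mid s)$. *)

theory Defs
  imports "HOL-Probability.Probability"
begin

text \<open>A policy is a kernel pi :: 's => 'a measure (pi s = pi(.|s)); the transition kernel is
  P :: 's => 'a => 's measure (P s a = p(.|s,a)); p0 is the initial state distribution.\<close>

primrec state_dist ::
  "('s \<Rightarrow> 'a \<Rightarrow> 's measure) \<Rightarrow> ('s \<Rightarrow> 'a measure) \<Rightarrow> 's measure \<Rightarrow> nat \<Rightarrow> 's measure" where
  "state_dist P pol mu 0 = mu"
| "state_dist P pol mu (Suc t) =
     bind (state_dist P pol mu t) (\<lambda>s. bind (pol s) (\<lambda>a. P s a))"

definition exp_reward :: "('s \<Rightarrow> 'a \<Rightarrow> real) \<Rightarrow> ('s \<Rightarrow> 'a measure) \<Rightarrow> 's measure \<Rightarrow> real" where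
  "exp_reward r pol mu = (\<integral>s. (\<integral>a. r s a \<partial>pol s) \<partial>mu)"

text \<open>Expected discounted return E[sum_t gamma^t r(s_t,a_t)] from s_0 ~ mu, following pol
  (written via linearity as the series of per-step expected rewards).\<close>
definition disc_return ::
  "('s \<Rightarrow> 'a \<Rightarrow> 's measure) \<Rightarrow> ('s \<Rightarrow> 'a \<Rightarrow> real) \<Rightarrow> real \<Rightarrow> ('s \<Rightarrow> 'a measure) \<Rightarrow> 's measure \<Rightarrow> real" where
  "disc_return P r \<gamma> pol mu = (\<Sum>t. \<gamma> ^ t * exp_reward r pol (state_dist P pol mu t))"

definition Jval ::
  "('s \<Rightarrow> 'a \<Rightarrow> 's measure) \<Rightarrow> ('s \<Rightarrow> 'a \<Rightarrow> real) \<Rightarrow> 's measure \<Rightarrow> real \<Rightarrow> ('s \<Rightarrow> 'a measure) \<Rightarrow> real" where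
  "Jval P r p0 \<gamma> pol = disc_return P r \<gamma> pol p0"

definition Qfun ::
  "('s \<Rightarrow> 'a \<Rightarrow> 's measure) \<Rightarrow> ('s \<Rightarrow> 'a \<Rightarrow> real) \<Rightarrow> real \<Rightarrow> ('s \<Rightarrow> 'a measure) \<Rightarrow> 's \<Rightarrow> 'a \<Rightarrow> real" where
  "Qfun P r \<gamma> pol s a = r s a + \<gamma> * disc_return P r \<gamma> pol (P s a)"

definition Vfun ::
  "('s \<Rightarrow> 'a \<Rightarrow> 's measure) \<Rightarrow> ('s \<Rightarrow> 'a \<Rightarrow> real) \<Rightarrow> real \<Rightarrow> ('s \<Rightarrow> 'a measure) \<Rightarrow> 's \<Rightarrow> real" where
  "Vfun P r \<gamma> pol s = (\<integral>a. Qfun P r \<gamma> pol s a \<partial>pol s)"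

definition Adv ::
  "('s \<Rightarrow> 'a \<Rightarrow> 's measure) \<Rightarrow> ('s \<Rightarrow> 'a \<Rightarrow> real) \<Rightarrow> real \<Rightarrow> ('s \<Rightarrow> 'a measure) \<Rightarrow> 's \<Rightarrow> 'a \<Rightarrow> real" where
  "Adv P r \<gamma> pol s a = Qfun P r \<gamma> pol s a - Vfun P r \<gamma> pol s"

definition normalizer ::
  "(real \<Rightarrow> real) \<Rightarrow> ('s \<Rightarrow> 'a \<Rightarrow> real) \<Rightarrow> ('s \<Rightarrow> 'a measure) \<Rightarrow> 's \<Rightarrow> real" where
  "normalizer f Ad pihat s = (\<integral>a. f (Ad s a) \<partial>pihat s)"

end

theory Submission
  imports Defs
begin

lemma abs_integral_le_prob:
  fixes g :: "'x \<Rightarrow> real"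
  assumes "prob_space M" "g \<in> borel_measurable M" "\<And>x. x \<in> space M \<Longrightarrow> \<bar>g x\<bar> \<le> C"
  shows "\<bar>\<integral>x. g x \<partial>M\<bar> \<le> C"
proof -
  interpret prob_space M by fact
  have int: "integrable M g"
    using assms by (intro integrable_const_bound[where B=C]) auto
  have "\<bar>\<integral>x. g x \<partial>M\<bar> \<le> (\<integral>x. \<bar>g x\<bar> \<partial>M)" by (rule integral_abs_bound)
  also have "\<dots> \<le> (\<integral>x. C \<partial>M)"
    using int assms by (intro integral_mono) auto
  also have "\<dots> = C" by (simp add: prob_space)
  finally show ?thesis .
qed

lemma integrable_bounded_prob:
  fixes g :: "'x \<Rightarrow> real"
  assumes "prob_space M" "g \<in> borel_measurable M" "\<And>x. x \<in> space M \<Longrightarrow> \<bar>g x\<bar> \<le> C"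
  shows "integrable M g"
proof -
  interpret prob_space M by fact
  show ?thesis using assms by (intro integrable_const_bound[where B=C]) auto
qed

lemma kernel_integral_measurable:
  fixes F :: "'s \<Rightarrow> 'a \<Rightarrow> real"
  assumes F: "(\<lambda>(s, a). F s a) \<in> borel_measurable (S \<Otimes>\<^sub>M Act)"
    and K: "K \<in> S \<rightarrow>\<^sub>M prob_algebra Act"
  shows "(\<lambda>s. \<integral>a. F s a \<partial>K s) \<in> borel_measurable S"
proof -
  have D: "(\<lambda>s. distr (K s) (S \<Otimes>\<^sub>M Act) (\<lambda>a. (s, a))) \<in> S \<rightarrow>\<^sub>M prob_algebra (S \<Otimes>\<^sub>M Act)"
    by (rule measurable_distr_prob_space2[OF K]) simp
  have "(\<lambda>s. \<integral>z. (\<lambda>(s, a). F s a) z \<partial>distr (K s) (S \<Otimes>\<^sub>M Act) (\<lambda>a. (s, a))) \<in> borel_measurable S"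
    using measurable_compose[OF measurable_prob_algebraD[OF D] integral_measurable_subprob_algebra[OF F]] .
  moreover have "(\<integral>z. (\<lambda>(s, a). F s a) z \<partial>distr (K s) (S \<Otimes>\<^sub>M Act) (\<lambda>a. (s, a))) = (\<integral>a. F s a \<partial>K s)"
    if s: "s \<in> space S" for s
  proof -
    have sK: "sets (K s) = sets Act"
      using measurable_space[OF K s] by (simp add: space_prob_algebra)
    have "(\<lambda>a. (s, a)) \<in> K s \<rightarrow>\<^sub>M S \<Otimes>\<^sub>M Act"
      using s by (simp add: measurable_cong_sets[OF sK refl])
    then show ?thesis by (subst integral_distr) (auto intro: F)
  qed
  ultimately show ?thesis by (rule measurable_cong[THEN iffD1, rotated]) simp
qed

lemma section_meas:
  fixes F :: "'s \<Rightarrow> 'a \<Rightarrow> 'b::topological_space"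
  assumes F: "(\<lambda>(s, a). F s a) \<in> borel_measurable (S \<Otimes>\<^sub>M Act)" and s: "s \<in> space S"
    and M: "sets M = sets Act"
  shows "F s \<in> borel_measurable M"
proof -
  have "(\<lambda>a. (\<lambda>(s, a). F s a) (s, a)) \<in> borel_measurable Act"
    by (rule measurable_compose[OF measurable_Pair1'[OF s] F])
  then show ?thesis by (simp add: measurable_cong_sets[OF M refl])
qed

locale mdp =
  fixes S :: "'s measure" and Act :: "'a measure"
    and P :: "'s \<Rightarrow> 'a \<Rightarrow> 's measure" and r :: "'s \<Rightarrow> 'a \<Rightarrow> real"
    and \<gamma> :: real and B :: real
  assumes trans: "(\<lambda>(s, a). P s a) \<in> S \<Otimes>\<^sub>M Act \<rightarrow>\<^sub>M prob_algebra S"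
    and rew_meas: "(\<lambda>(s, a). r s a) \<in> borel_measurable (S \<Otimes>\<^sub>M Act)"
    and rew_bdd: "\<And>s a. s \<in> space S \<Longrightarrow> a \<in> space Act \<Longrightarrow> \<bar>r s a\<bar> \<le> B"
    and B_nn: "0 \<le> B"
    and disc: "0 \<le> \<gamma>" "\<gamma> < 1"
begin

lemma P_kernel: "s \<in> space S \<Longrightarrow> P s \<in> Act \<rightarrow>\<^sub>M prob_algebra S"
  using measurable_compose[OF measurable_Pair1' trans] by simp

lemma Tk_kernel: "pol \<in> S \<rightarrow>\<^sub>M prob_algebra Act \<Longrightarrow>
    (\<lambda>s. bind (pol s) (\<lambda>a. P s a)) \<in> S \<rightarrow>\<^sub>M prob_algebra S"
  by (rule measurable_bind_prob_space2[OF _ trans])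

lemma sd_meas:
  assumes pol: "pol \<in> S \<rightarrow>\<^sub>M prob_algebra Act"
  shows "(\<lambda>mu. state_dist P pol mu t) \<in> prob_algebra S \<rightarrow>\<^sub>M prob_algebra S"
proof (induction t)
  case 0 then show ?case by simp
next
  case (Suc t) then show ?case
    by (simp add: measurable_bind_prob_space[OF Suc Tk_kernel[OF pol]])
qed

lemma sd_space: "pol \<in> S \<rightarrow>\<^sub>M prob_algebra Act \<Longrightarrow> mu \<in> space (prob_algebra S) \<Longrightarrow>
   state_dist P pol mu t \<in> space (prob_algebra S)"
  by (rule measurable_space[OF sd_meas])

lemma prob_alg_D: "mu \<in> space (prob_algebra M) \<Longrightarrow> prob_space mu \<and> sets mu = sets M \<and> space mu = space M"
proof -
  assume "mu \<in> space (prob_algebra M)"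
  then have "sets mu = sets M" "prob_space mu" by (auto simp: space_prob_algebra)
  then show ?thesis using sets_eq_imp_space_eq[of mu M] by simp
qed

lemma kernel_D: "K \<in> M \<rightarrow>\<^sub>M prob_algebra N \<Longrightarrow> x \<in> space M \<Longrightarrow>
   prob_space (K x) \<and> sets (K x) = sets N \<and> space (K x) = space N"
  by (rule prob_alg_D[OF measurable_space])

lemma g_meas: "pol \<in> S \<rightarrow>\<^sub>M prob_algebra Act \<Longrightarrow> (\<lambda>s. \<integral>a. r s a \<partial>pol s) \<in> borel_measurable S"
  by (rule kernel_integral_measurable[OF rew_meas])

lemma g_bound:
  assumes pol: "pol \<in> S \<rightarrow>\<^sub>M prob_algebra Act" and s: "s \<in> space S"
  shows "\<bar>\<integral>a. r s a \<partial>pol s\<bar> \<le> B"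
  using kernel_D[OF pol s] rew_bdd[OF s]
  by (intro abs_integral_le_prob section_meas[OF rew_meas s]) auto

lemma exp_meas:
  assumes pol: "pol \<in> S \<rightarrow>\<^sub>M prob_algebra Act"
  shows "(\<lambda>mu. exp_reward r pol mu) \<in> borel_measurable (prob_algebra S)"
  unfolding exp_reward_def prob_algebra_def
  by (intro measurable_restrict_space1 integral_measurable_subprob_algebra g_meas pol)

lemma exp_bound:
  assumes pol: "pol \<in> S \<rightarrow>\<^sub>M prob_algebra Act" and mu: "mu \<in> space (prob_algebra S)"
  shows "\<bar>exp_reward r pol mu\<bar> \<le> B"
proof -
  have ps: "prob_space mu" and st: "sets mu = sets S" and sp: "space mu = space S"
    using prob_alg_D[OF mu] by auto
  have m: "(\<lambda>s. \<integral>a. r s a \<partial>pol s) \<in> borel_measurable mu"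
    using g_meas[OF pol] by (simp add: measurable_cong_sets[OF st refl])
  show ?thesis unfolding exp_reward_def
    by (rule abs_integral_le_prob[OF ps m]) (use g_bound[OF pol] sp in simp)
qed

lemma W_meas:
  assumes pol: "pol \<in> S \<rightarrow>\<^sub>M prob_algebra Act"
  shows "(\<lambda>mu. disc_return P r \<gamma> pol mu) \<in> borel_measurable (prob_algebra S)"
  unfolding disc_return_def
  by (intro borel_measurable_suminf borel_measurable_times measurable_const
      measurable_compose[OF sd_meas[OF pol] exp_meas[OF pol]]) auto

lemma term_bound:
  assumes pol: "pol \<in> S \<rightarrow>\<^sub>M prob_algebra Act" and mu: "mu \<in> space (prob_algebra S)"
  shows "norm (\<gamma> ^ t * exp_reward r pol (state_dist P pol mu t)) \<le> B * \<gamma> ^ t"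
proof -
  have "\<gamma> ^ t * \<bar>exp_reward r pol (state_dist P pol mu t)\<bar> \<le> \<gamma> ^ t * B"
    using exp_bound[OF pol sd_space[OF pol mu]] disc by (intro mult_left_mono) auto
  then show ?thesis using disc by (simp add: abs_mult mult.commute)
qed

lemma geo_summable: "summable (\<lambda>t. B * \<gamma> ^ t)"
  using disc by (intro summable_mult) simp

lemma W_summable_norm:
  assumes pol: "pol \<in> S \<rightarrow>\<^sub>M prob_algebra Act" and mu: "mu \<in> space (prob_algebra S)"
  shows "summable (\<lambda>t. norm (\<gamma> ^ t * exp_reward r pol (state_dist P pol mu t)))"
  by (rule summable_comparison_test'[OF geo_summable]) (use term_bound[OF pol mu] in simp)

lemma W_summable:
  assumes pol: "pol \<in> S \<rightarrow>\<^sub>M prob_algebra Act" and mu: "mu \<in> space (prob_algebra S)"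
  shows "summable (\<lambda>t. \<gamma> ^ t * exp_reward r pol (state_dist P pol mu t))"
  by (rule summable_norm_cancel[OF W_summable_norm[OF pol mu]])

lemma W_bound:
  assumes pol: "pol \<in> S \<rightarrow>\<^sub>M prob_algebra Act" and mu: "mu \<in> space (prob_algebra S)"
  shows "\<bar>disc_return P r \<gamma> pol mu\<bar> \<le> B / (1 - \<gamma>)"
proof -
  have "\<bar>disc_return P r \<gamma> pol mu\<bar> \<le> (\<Sum>t. norm (\<gamma> ^ t * exp_reward r pol (state_dist P pol mu t)))"
    unfolding disc_return_def using summable_norm[OF W_summable_norm[OF pol mu]] by simp
  also have "\<dots> \<le> (\<Sum>t. B * \<gamma> ^ t)"
    by (intro suminf_le term_bound[OF pol mu] W_summable_norm[OF pol mu] geo_summable)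
  also have "\<dots> = B / (1 - \<gamma>)"
    using disc by (simp add: suminf_mult suminf_geometric)
  finally show ?thesis .
qed

lemma sd_shift:
  "state_dist P pol (bind mu (\<lambda>s. bind (pol s) (\<lambda>a. P s a))) t = state_dist P pol mu (Suc t)"
  by (induction t) simp_all

lemma W_shift:
  assumes pol: "pol \<in> S \<rightarrow>\<^sub>M prob_algebra Act" and mu: "mu \<in> space (prob_algebra S)"
  shows "disc_return P r \<gamma> pol mu = exp_reward r pol mu
     + \<gamma> * disc_return P r \<gamma> pol (bind mu (\<lambda>s. bind (pol s) (\<lambda>a. P s a)))"
proof -
  let ?mu1 = "bind mu (\<lambda>s. bind (pol s) (\<lambda>a. P s a))"
  have mu1: "?mu1 \<in> space (prob_algebra S)"
    using sd_space[OF pol mu, of 1] by simp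
  let ?f = "\<lambda>t. \<gamma> ^ t * exp_reward r pol (state_dist P pol mu t)"
  have "(\<Sum>n. ?f (Suc n)) = suminf ?f - ?f 0"
    by (rule suminf_split_head[OF W_summable[OF pol mu]])
  moreover have "(\<Sum>n. ?f (Suc n)) = \<gamma> * disc_return P r \<gamma> pol ?mu1"
    unfolding disc_return_def sd_shift[symmetric]
    by (subst suminf_mult[symmetric, OF W_summable[OF pol mu1]]) (simp add: mult.assoc)
  ultimately show ?thesis unfolding disc_return_def by simp
qed


lemma sd_bind:
  assumes pol: "pol \<in> S \<rightarrow>\<^sub>M prob_algebra Act" and K: "K \<in> X \<rightarrow>\<^sub>M prob_algebra S"
    and nu: "nu \<in> space (prob_algebra X)"
  shows "state_dist P pol (bind nu K) t = bind nu (\<lambda>x. state_dist P pol (K x) t)"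
proof (induction t)
  case 0 then show ?case by simp
next
  case (Suc t)
  have st: "sets nu = sets X" using prob_alg_D[OF nu] by auto
  have M1: "(\<lambda>x. state_dist P pol (K x) t) \<in> nu \<rightarrow>\<^sub>M subprob_algebra S"
    using measurable_prob_algebraD[OF measurable_compose[OF K sd_meas[OF pol]]]
    by (simp add: measurable_cong_sets[OF st refl])
  show ?case
    using bind_assoc[OF M1 measurable_prob_algebraD[OF Tk_kernel[OF pol]]] Suc by simp
qed

lemma exp_bind:
  assumes pol: "pol \<in> S \<rightarrow>\<^sub>M prob_algebra Act" and K: "K \<in> X \<rightarrow>\<^sub>M prob_algebra S"
    and nu: "nu \<in> space (prob_algebra X)"
  shows "exp_reward r pol (bind nu K) = (\<integral>x. exp_reward r pol (K x) \<partial>nu)"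
proof -
  have st: "sets nu = sets X" and sp: "space nu = space X" and ps: "prob_space nu"
    using prob_alg_D[OF nu] by auto
  have N: "K \<in> nu \<rightarrow>\<^sub>M subprob_algebra S"
    using measurable_prob_algebraD[OF K] by (simp add: measurable_cong_sets[OF st refl])
  have fin: "finite_measure nu" using ps by (simp add: prob_space.finite_measure)
  have Mb: "AE x in nu. emeasure (K x) (space (K x)) \<le> ennreal 1"
  proof (rule AE_I2)
    fix x assume "x \<in> space nu"
    then have "prob_space (K x)" using kernel_D[OF K] sp by auto
    then show "emeasure (K x) (space (K x)) \<le> ennreal 1" by (simp add: prob_space.emeasure_space_1)
  qed
  show ?thesis unfolding exp_reward_def
    by (rule integral_bind[OF g_meas[OF pol] g_bound[OF pol] N fin Mb])
qed

lemma W_bind: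
  assumes pol: "pol \<in> S \<rightarrow>\<^sub>M prob_algebra Act" and K: "K \<in> X \<rightarrow>\<^sub>M prob_algebra S"
    and nu: "nu \<in> space (prob_algebra X)"
  shows "disc_return P r \<gamma> pol (bind nu K) = (\<integral>x. disc_return P r \<gamma> pol (K x) \<partial>nu)"
proof -
  have st: "sets nu = sets X" and sp: "space nu = space X" and ps: "prob_space nu"
    using prob_alg_D[OF nu] by auto
  define F where "F t x = \<gamma> ^ t * exp_reward r pol (state_dist P pol (K x) t)" for t x
  have Kt: "(\<lambda>x. state_dist P pol (K x) t) \<in> X \<rightarrow>\<^sub>M prob_algebra S" for t
    by (rule measurable_compose[OF K sd_meas[OF pol]])
  have Fm: "F t \<in> borel_measurable nu" for t
    unfolding F_def measurable_cong_sets[OF st refl]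
    by (intro borel_measurable_times measurable_const measurable_compose[OF Kt exp_meas[OF pol]]) auto
  have Kx: "x \<in> space nu \<Longrightarrow> K x \<in> space (prob_algebra S)" for x
    using measurable_space[OF K] sp by auto
  have Fb: "x \<in> space nu \<Longrightarrow> \<bar>F t x\<bar> \<le> B * \<gamma> ^ t" for t x
    using term_bound[OF pol Kx] unfolding F_def by simp
  have Fi: "integrable nu (F t)" for t
    by (rule integrable_bounded_prob[OF ps Fm Fb])
  have Fs: "AE x in nu. summable (\<lambda>t. norm (F t x))"
    by (rule AE_I2) (use W_summable_norm[OF pol Kx] in \<open>simp add: F_def\<close>)
  have Fs2: "summable (\<lambda>t. \<integral>x. norm (F t x) \<partial>nu)"
  proof (rule summable_comparison_test'[OF geo_summable])
    fix t :: nat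
    have "\<bar>\<integral>x. \<bar>F t x\<bar> \<partial>nu\<bar> \<le> B * \<gamma> ^ t"
      by (rule abs_integral_le_prob[OF ps]) (use Fm Fb in auto)
    then show "norm (\<integral>x. norm (F t x) \<partial>nu) \<le> B * \<gamma> ^ t" by simp
  qed
  have "disc_return P r \<gamma> pol (bind nu K) = (\<Sum>t. \<integral>x. F t x \<partial>nu)"
    unfolding disc_return_def F_def
    by (simp add: sd_bind[OF pol K nu] exp_bind[OF pol Kt nu])
  also have "\<dots> = (\<integral>x. (\<Sum>t. F t x) \<partial>nu)"
    by (rule integral_suminf[symmetric, OF Fi Fs Fs2])
  also have "\<dots> = (\<integral>x. disc_return P r \<gamma> pol (K x) \<partial>nu)"
    unfolding disc_return_def F_def ..
  finally show ?thesis .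
qed


lemma WP_meas:
  assumes pihat: "pihat \<in> S \<rightarrow>\<^sub>M prob_algebra Act"
  shows "(\<lambda>(s, a). disc_return P r \<gamma> pihat (P s a)) \<in> borel_measurable (S \<Otimes>\<^sub>M Act)"
proof -
  have "(\<lambda>z. disc_return P r \<gamma> pihat ((\<lambda>(s, a). P s a) z)) \<in> borel_measurable (S \<Otimes>\<^sub>M Act)"
    by (rule measurable_compose[OF trans W_meas[OF pihat]])
  moreover have "(\<lambda>z. disc_return P r \<gamma> pihat ((\<lambda>(s, a). P s a) z)) = (\<lambda>(s, a). disc_return P r \<gamma> pihat (P s a))"
    by (auto simp: fun_eq_iff)
  ultimately show ?thesis by simp
qed

lemma WP_bound:
  assumes pihat: "pihat \<in> S \<rightarrow>\<^sub>M prob_algebra Act" and s: "s \<in> space S" and a: "a \<in> space Act"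
  shows "\<bar>disc_return P r \<gamma> pihat (P s a)\<bar> \<le> B / (1 - \<gamma>)"
  by (rule W_bound[OF pihat measurable_space[OF P_kernel[OF s] a]])

lemma Q_meas:
  assumes pihat: "pihat \<in> S \<rightarrow>\<^sub>M prob_algebra Act"
  shows "(\<lambda>(s, a). Qfun P r \<gamma> pihat s a) \<in> borel_measurable (S \<Otimes>\<^sub>M Act)"
proof -
  have "(\<lambda>z. (\<lambda>(s, a). r s a) z + \<gamma> * (\<lambda>(s, a). disc_return P r \<gamma> pihat (P s a)) z) \<in> borel_measurable (S \<Otimes>\<^sub>M Act)"
    by (intro borel_measurable_add borel_measurable_times measurable_const rew_meas WP_meas[OF pihat]) auto
  moreover have "(\<lambda>z. (\<lambda>(s, a). r s a) z + \<gamma> * (\<lambda>(s, a). disc_return P r \<gamma> pihat (P s a)) z) = (\<lambda>(s, a). Qfun P r \<gamma> pihat s a)"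
    by (auto simp: fun_eq_iff Qfun_def)
  ultimately show ?thesis by simp
qed

lemma Q_bound:
  assumes pihat: "pihat \<in> S \<rightarrow>\<^sub>M prob_algebra Act" and s: "s \<in> space S" and a: "a \<in> space Act"
  shows "\<bar>Qfun P r \<gamma> pihat s a\<bar> \<le> B + B / (1 - \<gamma>)"
proof -
  have w: "\<bar>disc_return P r \<gamma> pihat (P s a)\<bar> \<le> B / (1 - \<gamma>)" by (rule WP_bound[OF pihat s a])
  have "\<bar>\<gamma> * disc_return P r \<gamma> pihat (P s a)\<bar> \<le> 1 * (B / (1 - \<gamma>))"
    unfolding abs_mult using disc w by (intro mult_mono) auto
  then show ?thesis unfolding Qfun_def using rew_bdd[OF s a] by simp
qed

lemma one_step:
  assumes pihat: "pihat \<in> S \<rightarrow>\<^sub>M prob_algebra Act" and pol: "pol \<in> S \<rightarrow>\<^sub>M prob_algebra Act"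
    and mu: "mu \<in> space (prob_algebra S)"
  shows "exp_reward r pol mu + \<gamma> * disc_return P r \<gamma> pihat (bind mu (\<lambda>s. bind (pol s) (\<lambda>a. P s a)))
     = (\<integral>s. (\<integral>a. Qfun P r \<gamma> pihat s a \<partial>pol s) \<partial>mu)"
proof -
  have st: "sets mu = sets S" and sp: "space mu = space S" and ps: "prob_space mu"
    using prob_alg_D[OF mu] by auto
  define h where "h s = (\<integral>a. disc_return P r \<gamma> pihat (P s a) \<partial>pol s)" for s
  have hm: "h \<in> borel_measurable mu"
    unfolding h_def measurable_cong_sets[OF st refl]
    by (rule kernel_integral_measurable[OF WP_meas[OF pihat] pol])
  have gm: "(\<lambda>s. \<integral>a. r s a \<partial>pol s) \<in> borel_measurable mu"
    unfolding measurable_cong_sets[OF st refl] by (rule g_meas[OF pol])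
  have polD: "s \<in> space S \<Longrightarrow> prob_space (pol s) \<and> sets (pol s) = sets Act \<and> space (pol s) = space Act" for s
    by (rule kernel_D[OF pol])
  have hb: "\<bar>h s\<bar> \<le> B / (1 - \<gamma>)" if s: "s \<in> space S" for s
    unfolding h_def using polD[OF s] WP_bound[OF pihat s]
    by (intro abs_integral_le_prob section_meas[OF WP_meas[OF pihat] s]) auto
  have hi: "integrable mu h" by (rule integrable_bounded_prob[OF ps hm]) (use hb sp in auto)
  have gi: "integrable mu (\<lambda>s. \<integral>a. r s a \<partial>pol s)"
    by (rule integrable_bounded_prob[OF ps gm]) (use g_bound[OF pol] sp in auto)
  have Wb: "disc_return P r \<gamma> pihat (bind mu (\<lambda>s. bind (pol s) (\<lambda>a. P s a))) = (\<integral>s. h s \<partial>mu)"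
  proof -
    have "disc_return P r \<gamma> pihat (bind mu (\<lambda>s. bind (pol s) (\<lambda>a. P s a)))
       = (\<integral>s. disc_return P r \<gamma> pihat (bind (pol s) (\<lambda>a. P s a)) \<partial>mu)"
      by (rule W_bind[OF pihat Tk_kernel[OF pol] mu])
    also have "\<dots> = (\<integral>s. h s \<partial>mu)"
    proof (rule Bochner_Integration.integral_cong[OF refl])
      fix s assume "s \<in> space mu"
      then have s: "s \<in> space S" using sp by simp
      show "disc_return P r \<gamma> pihat (bind (pol s) (\<lambda>a. P s a)) = h s"
        unfolding h_def by (rule W_bind[OF pihat P_kernel[OF s] measurable_space[OF pol s]])
    qed
    finally show ?thesis .
  qed
  have pw: "(\<integral>a. Qfun P r \<gamma> pihat s a \<partial>pol s) = (\<integral>a. r s a \<partial>pol s) + \<gamma> * h s" if s: "s \<in> space S" for s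
  proof -
    have ri: "integrable (pol s) (r s)"
      using polD[OF s] rew_bdd[OF s]
      by (intro integrable_bounded_prob section_meas[OF rew_meas s]) auto
    have wi: "integrable (pol s) (\<lambda>a. disc_return P r \<gamma> pihat (P s a))"
      using polD[OF s] WP_bound[OF pihat s]
      by (intro integrable_bounded_prob section_meas[OF WP_meas[OF pihat] s]) auto
    show ?thesis unfolding Qfun_def h_def using ri wi by simp
  qed
  have "exp_reward r pol mu + \<gamma> * disc_return P r \<gamma> pihat (bind mu (\<lambda>s. bind (pol s) (\<lambda>a. P s a)))
      = (\<integral>s. (\<integral>a. r s a \<partial>pol s) + \<gamma> * h s \<partial>mu)"
    unfolding exp_reward_def Wb using gi hi by simp
  also have "\<dots> = (\<integral>s. (\<integral>a. Qfun P r \<gamma> pihat s a \<partial>pol s) \<partial>mu)"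
    by (rule Bochner_Integration.integral_cong[OF refl]) (use pw sp in simp)
  finally show ?thesis .
qed


lemma pw_ineq:
  assumes pihat: "pihat \<in> S \<rightarrow>\<^sub>M prob_algebra Act" and pol: "pol \<in> S \<rightarrow>\<^sub>M prob_algebra Act"
    and f_meas: "f \<in> borel_measurable borel"
    and Bf: "\<And>x. \<bar>f x\<bar> \<le> Bf"
    and f_nonneg: "\<And>x. 0 \<le> f x"
    and f_mono: "mono f"
    and s: "s \<in> space S"
    and dens: "pol s = density (pihat s)
         (\<lambda>a. ennreal (f (Adv P r \<gamma> pihat s a)
                 / normalizer f (Adv P r \<gamma> pihat) pihat s))"
  shows "Vfun P r \<gamma> pihat s \<le> (\<integral>a. Qfun P r \<gamma> pihat s a \<partial>pol s)"
proof -
  define M where "M = pihat s"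
  have ps: "prob_space M" and st: "sets M = sets Act" and sp: "space M = space Act"
    using kernel_D[OF pihat s] unfolding M_def by auto
  interpret M: prob_space M by (rule ps)
  define q where "q a = Qfun P r \<gamma> pihat s a" for a
  define V where "V = Vfun P r \<gamma> pihat s"
  define Z where "Z = normalizer f (Adv P r \<gamma> pihat) pihat s"
  define C where "C = B + B / (1 - \<gamma>)"
  have V_eq: "V = (\<integral>a. q a \<partial>M)" unfolding V_def Vfun_def q_def M_def ..
  have Adv_eq: "Adv P r \<gamma> pihat s a = q a - V" for a
    unfolding Adv_def q_def V_def ..
  have Z_eq: "Z = (\<integral>a. f (q a - V) \<partial>M)"
    unfolding Z_def normalizer_def M_def Adv_eq ..
  have qm: "q \<in> borel_measurable M"
    unfolding q_def by (rule section_meas[OF Q_meas[OF pihat] s st])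
  have qb: "a \<in> space M \<Longrightarrow> \<bar>q a\<bar> \<le> C" for a
    unfolding q_def C_def using Q_bound[OF pihat s] sp by auto
  have qi: "integrable M q" by (rule integrable_bounded_prob[OF ps qm qb])
  have fm: "(\<lambda>a. f (q a - V)) \<in> borel_measurable M"
    by (rule measurable_compose[OF borel_measurable_diff[OF qm measurable_const] f_meas]) simp
  have Bf0: "0 \<le> Bf" using Bf[of 0] by simp
  have fi: "integrable M (\<lambda>a. f (q a - V))"
    by (rule integrable_bounded_prob[OF ps fm]) (use Bf in auto)
  have Z0: "0 \<le> Z" unfolding Z_eq by (rule integral_nonneg_AE) (use f_nonneg in auto)
  have polD: "prob_space (pol s)" "space (pol s) = space Act"
    using kernel_D[OF pol s] by auto
  have Zp: "0 < Z"
  proof (rule ccontr)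
    assume "\<not> 0 < Z"
    then have "Z = 0" using Z0 by simp
    then have "pol s = density M (\<lambda>a. 0)"
      using dens unfolding M_def Z_def[symmetric] by simp
    then have "emeasure (pol s) (space Act) = 0"
      by (simp add: emeasure_density sp[symmetric])
    moreover have "emeasure (pol s) (space Act) = 1"
      using prob_space.emeasure_space_1[OF polD(1)] polD(2) by simp
    ultimately show False by simp
  qed
  define w where "w a = f (q a - V) / Z" for a
  have wm: "w \<in> borel_measurable M" unfolding w_def using fm by simp
  have w0: "0 \<le> w a" for a unfolding w_def using f_nonneg Z0 by simp
  have wb: "\<bar>w a\<bar> \<le> Bf / Z" for a
    unfolding w_def using Bf[of "q a - V"] Zp by (simp add: abs_div divide_right_mono)
  have wi: "integrable M w" unfolding w_def using fi by simp
  have w1: "(\<integral>a. w a \<partial>M) = 1" unfolding w_def using Zp Z_eq by simp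
  have wqi: "integrable M (\<lambda>a. w a * q a)"
  proof (rule integrable_bounded_prob[OF ps])
    show "(\<lambda>a. w a * q a) \<in> borel_measurable M" using wm qm by simp
    fix a assume a: "a \<in> space M"
    show "\<bar>w a * q a\<bar> \<le> Bf / Z * C"
      unfolding abs_mult using wb[of a] qb[OF a] Bf0 Zp by (intro mult_mono) auto
  qed
  have dens': "pol s = density M (\<lambda>a. ennreal (w a))"
    using dens unfolding M_def w_def Adv_eq Z_def[symmetric] by simp
  have eq1: "(\<integral>a. Qfun P r \<gamma> pihat s a \<partial>pol s) = (\<integral>a. w a * q a \<partial>M)"
    unfolding dens' q_def[symmetric]
    using integral_density[OF qm wm AE_I2[OF w0]] by simp
  have eq2: "(\<integral>a. w a * q a \<partial>M) - V = (\<integral>a. w a * q a - w a * V \<partial>M)"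
    using wqi wi w1 by simp
  have ineq: "(\<integral>a. f 0 / Z * (q a - V) \<partial>M) \<le> (\<integral>a. w a * q a - w a * V \<partial>M)"
  proof (rule integral_mono)
    show "integrable M (\<lambda>a. f 0 / Z * (q a - V))" using qi by simp
    show "integrable M (\<lambda>a. w a * q a - w a * V)" using wqi wi by simp
    fix a
    have key: "f 0 * (q a - V) \<le> f (q a - V) * (q a - V)"
    proof (cases "0 \<le> q a - V")
      case True
      then have "f 0 \<le> f (q a - V)" using f_mono by (simp add: monoD)
      then show ?thesis using True by (intro mult_right_mono)
    next
      case False
      then have "f (q a - V) \<le> f 0" using f_mono by (simp add: monoD)
      then show ?thesis using False by (intro mult_right_mono_neg) auto
    qed
    have "f 0 / Z * (q a - V) = (f 0 * (q a - V)) / Z" by simp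
    also have "\<dots> \<le> (f (q a - V) * (q a - V)) / Z" using key Zp by (intro divide_right_mono) auto
    also have "\<dots> = f (q a - V) / Z * (q a - V)" by simp
    also have "\<dots> = w a * q a - w a * V" unfolding w_def by (rule right_diff_distrib)
    finally show "f 0 / Z * (q a - V) \<le> w a * q a - w a * V" .
  qed
  have zero: "(\<integral>a. f 0 / Z * (q a - V) \<partial>M) = 0"
    using qi V_eq by (simp add: M.prob_space)
  show ?thesis
    using eq1 eq2 ineq zero unfolding V_def[symmetric] by linarith
qed

end

theorem theoremA4:
  fixes S :: "'s measure" and Act :: "'a measure"
    and P :: "'s \<Rightarrow> 'a \<Rightarrow> 's measure" and r :: "'s \<Rightarrow> 'a \<Rightarrow> real"
    and p0 :: "'s measure" and \<gamma> :: real
    and pol pihat :: "'s \<Rightarrow> 'a measure" and f :: "real \<Rightarrow> real"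
  assumes trans: "(\<lambda>(s, a). P s a) \<in> S \<Otimes>\<^sub>M Act \<rightarrow>\<^sub>M prob_algebra S"
    and init: "p0 \<in> space (prob_algebra S)"
    and rew_meas: "(\<lambda>(s, a). r s a) \<in> borel_measurable (S \<Otimes>\<^sub>M Act)"
    and rew_bdd: "\<exists>B. \<forall>s\<in>space S. \<forall>a\<in>space Act. \<bar>r s a\<bar> \<le> B"
    and disc: "0 \<le> \<gamma>" "\<gamma> < 1"
    and pol_kernel: "pol \<in> S \<rightarrow>\<^sub>M prob_algebra Act"
    and pihat_kernel: "pihat \<in> S \<rightarrow>\<^sub>M prob_algebra Act"
    and f_meas: "f \<in> borel_measurable borel"
    and f_bdd: "\<exists>B. \<forall>x. \<bar>f x\<bar> \<le> B"
    and f_nonneg: "\<And>x. 0 \<le> f x"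
    and f_mono: "mono f"
    and propto: "\<And>s. s \<in> space S \<Longrightarrow>
       pol s = density (pihat s)
         (\<lambda>a. ennreal (f (Adv P r \<gamma> pihat s a)
                 / normalizer f (Adv P r \<gamma> pihat) pihat s))"
  shows "Jval P r p0 \<gamma> pol \<ge> Jval P r p0 \<gamma> pihat"
proof -
  obtain B0 where B0: "\<forall>s\<in>space S. \<forall>a\<in>space Act. \<bar>r s a\<bar> \<le> B0" using rew_bdd by blast
  obtain Bf where Bf: "\<And>x. \<bar>f x\<bar> \<le> Bf" using f_bdd by blast
  define B where "B = max B0 0"
  interpret mdp S Act P r \<gamma> B
    by unfold_locales (use trans rew_meas B0 disc in \<open>auto simp: B_def intro: le_max_iff_disj[THEN iffD2]\<close>)
  define mu where "mu t = state_dist P pol p0 t" for t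
  have mus: "mu t \<in> space (prob_algebra S)" for t
    unfolding mu_def by (rule sd_space[OF pol_kernel init])
  have step: "disc_return P r \<gamma> pihat (mu t) \<le> exp_reward r pol (mu t) + \<gamma> * disc_return P r \<gamma> pihat (mu (Suc t))" for t
  proof -
    have st: "sets (mu t) = sets S" and sp: "space (mu t) = space S" and ps: "prob_space (mu t)"
      using prob_alg_D[OF mus[of t]] by auto
    have C: "\<And>s a. s \<in> space S \<Longrightarrow> a \<in> space Act \<Longrightarrow> \<bar>Qfun P r \<gamma> pihat s a\<bar> \<le> B + B / (1 - \<gamma>)"
      by (rule Q_bound[OF pihat_kernel])
    have int: "integrable (mu t) (\<lambda>s. \<integral>a. Qfun P r \<gamma> pihat s a \<partial>K s)" if K: "K \<in> S \<rightarrow>\<^sub>M prob_algebra Act" for K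
    proof (rule integrable_bounded_prob[OF ps])
      show "(\<lambda>s. \<integral>a. Qfun P r \<gamma> pihat s a \<partial>K s) \<in> borel_measurable (mu t)"
        unfolding measurable_cong_sets[OF st refl]
        by (rule kernel_integral_measurable[OF Q_meas[OF pihat_kernel] K])
      fix s assume "s \<in> space (mu t)"
      then have s: "s \<in> space S" using sp by simp
      show "\<bar>\<integral>a. Qfun P r \<gamma> pihat s a \<partial>K s\<bar> \<le> B + B / (1 - \<gamma>)"
        using kernel_D[OF K s] C[OF s]
        by (intro abs_integral_le_prob section_meas[OF Q_meas[OF pihat_kernel] s]) auto
    qed
    have "disc_return P r \<gamma> pihat (mu t) = (\<integral>s. (\<integral>a. Qfun P r \<gamma> pihat s a \<partial>pihat s) \<partial>mu t)"
      using W_shift[OF pihat_kernel mus] one_step[OF pihat_kernel pihat_kernel mus] by simp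
    also have "\<dots> \<le> (\<integral>s. (\<integral>a. Qfun P r \<gamma> pihat s a \<partial>pol s) \<partial>mu t)"
    proof (rule integral_mono[OF int[OF pihat_kernel] int[OF pol_kernel]])
      fix s assume "s \<in> space (mu t)"
      then have s: "s \<in> space S" using sp by simp
      show "(\<integral>a. Qfun P r \<gamma> pihat s a \<partial>pihat s) \<le> (\<integral>a. Qfun P r \<gamma> pihat s a \<partial>pol s)"
        using pw_ineq[OF pihat_kernel pol_kernel f_meas Bf f_nonneg f_mono s propto[OF s]]
        by (simp add: Vfun_def)
    qed
    also have "\<dots> = exp_reward r pol (mu t) + \<gamma> * disc_return P r \<gamma> pihat (mu (Suc t))"
      using one_step[OF pihat_kernel pol_kernel mus[of t]] by (simp add: mu_def)
    finally show ?thesis .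
  qed
  define e where "e t = \<gamma> ^ t * exp_reward r pol (mu t)" for t
  have ind: "disc_return P r \<gamma> pihat p0 \<le> (\<Sum>t<n. e t) + \<gamma> ^ n * disc_return P r \<gamma> pihat (mu n)" for n
  proof (induction n)
    case 0 then show ?case by (simp add: mu_def)
  next
    case (Suc n)
    have "\<gamma> ^ n * disc_return P r \<gamma> pihat (mu n) \<le> \<gamma> ^ n * (exp_reward r pol (mu n) + \<gamma> * disc_return P r \<gamma> pihat (mu (Suc n)))"
      using step[of n] disc by (intro mult_left_mono) auto
    then show ?case using Suc by (simp add: e_def algebra_simps)
  qed
  have lim1: "(\<lambda>n. \<Sum>t<n. e t) \<longlonglongrightarrow> Jval P r p0 \<gamma> pol"
    unfolding Jval_def disc_return_def e_def mu_def
    by (rule summable_LIMSEQ[OF W_summable[OF pol_kernel init]])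
  have lim2: "(\<lambda>n. \<gamma> ^ n * disc_return P r \<gamma> pihat (mu n)) \<longlonglongrightarrow> 0"
  proof (rule Lim_null_comparison)
    show "\<forall>\<^sub>F n in sequentially. norm (\<gamma> ^ n * disc_return P r \<gamma> pihat (mu n)) \<le> \<gamma> ^ n * (B / (1 - \<gamma>))"
    proof (rule always_eventually, rule allI)
      fix n
      have "\<gamma> ^ n * \<bar>disc_return P r \<gamma> pihat (mu n)\<bar> \<le> \<gamma> ^ n * (B / (1 - \<gamma>))"
        using W_bound[OF pihat_kernel mus] disc by (intro mult_left_mono) auto
      then show "norm (\<gamma> ^ n * disc_return P r \<gamma> pihat (mu n)) \<le> \<gamma> ^ n * (B / (1 - \<gamma>))"
        using disc by (simp add: abs_mult)
    qed
    show "(\<lambda>n. \<gamma> ^ n * (B / (1 - \<gamma>))) \<longlonglongrightarrow> 0"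
      using disc by (intro tendsto_mult_left_zero LIMSEQ_power_zero) auto
  qed
  have "(\<lambda>n. (\<Sum>t<n. e t) + \<gamma> ^ n * disc_return P r \<gamma> pihat (mu n)) \<longlonglongrightarrow> Jval P r p0 \<gamma> pol"
    using tendsto_add[OF lim1 lim2] by simp
  then have "disc_return P r \<gamma> pihat p0 \<le> Jval P r p0 \<gamma> pol"
    by (rule LIMSEQ_le_const) (use ind in blast)
  then show ?thesis by (simp add: Jval_def)
qed

end
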